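(* Let $\Omega=\{a,b,c,d\}$ and $\Sigma=2^\Omega$. Let $\mu_1,\mu_2,\mu_3,\mu_4$ be the probability measures on $\Sigma$ determined by $\mu_1(a)=\mu_1(b)=\mu_1(c)=\mu_1(d)=\tfrac14$; $\mu_2(a)=0,\ \mu_2(b)=\tfrac18,\ \mu_2(c)=\tfrac38,\ \mu_2(d)=\tfrac12$; $\mu_3(a)=\tfrac18,\ \mu_3(b)=\tfrac38,\ \mu_3(c)=0,\ \mu_3(d)=\tfrac12$; $\mu_4(a)=\tfrac38,\ \mu_4(b)=0,\ \mu_4(c)=\tfrac18,\ \mu_4(d)=\tfrac12$. Let $\mathcal{P}=\{\mu_1,\mu_2,\mu_3,\mu_4\}$ and $\mathcal{P}^*(X)=\max_{i}\mu_i(X)$. For $\epsilon>0$ define $\upsilon_\epsilon:\Sigma\to[0,1]$ by $\upsilon_\epsilon(\{a,b,c\})=\mathcal{P}^*(\{a,b,c\})+\epsilon$ and $\upsilon_\epsilon(X)=\mathcal{P}^*(X)$ for $X\ne\{a,b,c\}$. Then for every $0<\epsilon<\tfrac18$: (i) $\upsilon_\epsilon$ satisfies property (6), i.e. for all disjoint $A,B\subseteq\Omega$, $\upsilon_\epsilon(A)+(1-\upsilon_\epsilon(\Omega\setminus B))\le \upsilon_\epsilon(A\cup B)\le \upsilon_\epsilon(A)+\upsilon_\epsilon(B)$; and (ii) there is no set $\mathcal{P}'$ of probability measures on $\Sigma$ such that $\upsilon_\epsilon(X)=\sup\{\mu(X):\mu\in\mathcal{P}'\}$ for all $X\in\Si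gma$.
   Context: Probability measures are finitely additive functions $\mu:\Sigma\to[0,1]$ with $\mu(\emptyset)=0$, $\mu(\Omega)=1$. *)

theory Defs
  imports Complex_Main
begin

datatype omega = a | b | c | d

lemma UNIV_omega: "(UNIV :: omega set) = {a, b, c, d}"
  by (auto intro: omega.exhaust)

instance omega :: finite
  by standard (simp add: UNIV_omega)

definition prob_measure :: "(omega set \<Rightarrow> real) \<Rightarrow> bool" where
  "prob_measure \<mu> \<longleftrightarrow>
     (\<forall>X. 0 \<le> \<mu> X \<and> \<mu> X \<le> 1) \<and> \<mu> {} = 0 \<and> \<mu> UNIV = 1 \<and>
     (\<forall>A B. A \<inter> B = {} \<longrightarrow> \<mu> (A \<union> B) = \<mu> A + \<mu> B)"

definition pt_measure :: "(omega \<Rightarrow> real) \<Rightarrow> omega set \<Rightarrow> real" where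
  "pt_measure p X = (\<Sum>x\<in>X. p x)"

definition p1 :: "omega \<Rightarrow> real" where
  "p1 x = 1/4"
definition p2 :: "omega \<Rightarrow> real" where
  "p2 x = (case x of a \<Rightarrow> 0 | b \<Rightarrow> 1/8 | c \<Rightarrow> 3/8 | d \<Rightarrow> 1/2)"
definition p3 :: "omega \<Rightarrow> real" where
  "p3 x = (case x of a \<Rightarrow> 1/8 | b \<Rightarrow> 3/8 | c \<Rightarrow> 0 | d \<Rightarrow> 1/2)"
definition p4 :: "omega \<Rightarrow> real" where
  "p4 x = (case x of a \<Rightarrow> 3/8 | b \<Rightarrow> 0 | c \<Rightarrow> 1/8 | d \<Rightarrow> 1/2)"

definition mu1 :: "omega set \<Rightarrow> real" where "mu1 = pt_measure p1"
definition mu2 :: "omega set \<Rightarrow> real" where "mu2 = pt_measure p2"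
definition mu3 :: "omega set \<Rightarrow> real" where "mu3 = pt_measure p3"
definition mu4 :: "omega set \<Rightarrow> real" where "mu4 = pt_measure p4"

definition Pcal :: "(omega set \<Rightarrow> real) set" where
  "Pcal = {mu1, mu2, mu3, mu4}"

definition Pstar :: "omega set \<Rightarrow> real" where
  "Pstar X = Max ((\<lambda>\<mu>. \<mu> X) ` Pcal)"

definition upsilon :: "real \<Rightarrow> omega set \<Rightarrow> real" where
  "upsilon \<epsilon> X = (if X = {a, b, c} then Pstar X + \<epsilon> else Pstar X)"

definition property6 :: "(omega set \<Rightarrow> real) \<Rightarrow> bool" where
  "property6 \<upsilon> \<longleftrightarrow>
     (\<forall>A B. A \<inter> B = {} \<longrightarrow>
        \<upsilon> A + (1 - \<upsilon> (UNIV - B)) \<le> \<upsilon> (A \<union> B) \<and> \<upsilon> (A \<union> B) \<le> \<upsilon> A + \<upsilon> B)"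

end

theory Submission
  imports Defs
begin

lemma pt_exp: "pt_measure p X = (if a\<in>X then p a else 0) + (if b\<in>X then p b else 0)
   + (if c\<in>X then p c else 0) + (if d\<in>X then p d else 0)"
proof -
  have "pt_measure p X = (\<Sum>x\<in>UNIV. if x \<in> X then p x else 0)"
    unfolding pt_measure_def by (simp add: sum.If_cases)
  also have "\<dots> = (if a\<in>X then p a else 0) + (if b\<in>X then p b else 0)
   + (if c\<in>X then p c else 0) + (if d\<in>X then p d else 0)"
    by (simp add: UNIV_omega)
  finally show ?thesis .
qed

lemma Pstar_exp: "Pstar X = max (mu1 X) (max (mu2 X) (max (mu3 X) (mu4 X)))"
  unfolding Pstar_def Pcal_def by simp

lemma abc_iff: "(X = {a,b,c}) = (a\<in>X \<and> b\<in>X \<and> c\<in>X \<and> d\<notin>X)"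
proof
  assume "a\<in>X \<and> b\<in>X \<and> c\<in>X \<and> d\<notin>X"
  then show "X = {a,b,c}" by (auto intro: omega.exhaust)
qed auto

lemma ups_exp: "upsilon e X = max (mu1 X) (max (mu2 X) (max (mu3 X) (mu4 X)))
   + (if a\<in>X \<and> b\<in>X \<and> c\<in>X \<and> d\<notin>X then e else 0)"
  unfolding upsilon_def Pstar_exp abc_iff by simp

lemma disj_iff: "(A \<inter> B = {}) = (\<not>(a\<in>A \<and> a\<in>B) \<and> \<not>(b\<in>A \<and> b\<in>B) \<and> \<not>(c\<in>A \<and> c\<in>B) \<and> \<not>(d\<in>A \<and> d\<in>B))"
proof
  assume "A \<inter> B = {}" then show "\<not>(a\<in>A \<and> a\<in>B) \<and> \<not>(b\<in>A \<and> b\<in>B) \<and> \<not>(c\<in>A \<and> c\<in>B) \<and> \<not>(d\<in>A \<and> d\<in>B)" by blast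
next
  assume H: "\<not>(a\<in>A \<and> a\<in>B) \<and> \<not>(b\<in>A \<and> b\<in>B) \<and> \<not>(c\<in>A \<and> c\<in>B) \<and> \<not>(d\<in>A \<and> d\<in>B)"
  show "A \<inter> B = {}"
  proof (rule ccontr)
    assume "A \<inter> B \<noteq> {}"
    then obtain x where "x \<in> A" "x \<in> B" by blast
    then show False using H by (cases x) auto
  qed
qed

lemma part1:
  assumes "0 < e" "e < 1/8"
  shows "property6 (upsilon e)"
  unfolding property6_def
proof (intro allI impI)
  fix A B :: "omega set"
  assume "A \<inter> B = {}"
  then have D: "\<not>(a\<in>A \<and> a\<in>B) \<and> \<not>(b\<in>A \<and> b\<in>B) \<and> \<not>(c\<in>A \<and> c\<in>B) \<and> \<not>(d\<in>A \<and> d\<in>B)"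
    using disj_iff by blast
  show "upsilon e A + (1 - upsilon e (UNIV - B)) \<le> upsilon e (A \<union> B) \<and> upsilon e (A \<union> B) \<le> upsilon e A + upsilon e B"
    unfolding ups_exp mu1_def mu2_def mu3_def mu4_def pt_exp
    using D assms
    by (cases "a\<in>A"; cases "a\<in>B"; cases "b\<in>A"; cases "b\<in>B"; cases "c\<in>A"; cases "c\<in>B"; cases "d\<in>A"; cases "d\<in>B";
        simp add: p1_def p2_def p3_def p4_def max_def)
qed

lemma part2:
  assumes "0 < e"
  shows "\<not> (\<exists>P' :: (omega set \<Rightarrow> real) set.
               (\<forall>\<mu>\<in>P'. prob_measure \<mu>) \<and>
               (\<forall>X. upsilon e X = Sup ((\<lambda>\<mu>. \<mu> X) ` P')))"
proof
  assume "\<exists>P' :: (omega set \<Rightarrow> real) set.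
               (\<forall>\<mu>\<in>P'. prob_measure \<mu>) \<and>
               (\<forall>X. upsilon e X = Sup ((\<lambda>\<mu>. \<mu> X) ` P'))"
  then obtain P' :: "(omega set \<Rightarrow> real) set" where pm: "\<forall>\<mu>\<in>P'. prob_measure \<mu>"
    and eq: "\<forall>X. upsilon e X = Sup ((\<lambda>\<mu>. \<mu> X) ` P')" by blast
  have v0: "upsilon e {} = 0"
    unfolding ups_exp mu1_def mu2_def mu3_def mu4_def pt_exp by simp
  have vabc: "upsilon e {a,b,c} = 3/4 + e"
    unfolding ups_exp mu1_def mu2_def mu3_def mu4_def pt_exp by (simp add: p1_def p2_def p3_def p4_def)
  have vab: "upsilon e {a,b} = 1/2"
    unfolding ups_exp mu1_def mu2_def mu3_def mu4_def pt_exp by (simp add: p1_def p2_def p3_def p4_def)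
  have vbc: "upsilon e {b,c} = 1/2"
    unfolding ups_exp mu1_def mu2_def mu3_def mu4_def pt_exp by (simp add: p1_def p2_def p3_def p4_def)
  have vac: "upsilon e {a,c} = 1/2"
    unfolding ups_exp mu1_def mu2_def mu3_def mu4_def pt_exp by (simp add: p1_def p2_def p3_def p4_def)
  have ne: "P' \<noteq> {}"
  proof
    assume "P' = {}"
    then have "upsilon e {} = upsilon e {a,b,c}" using eq by simp
    then show False using v0 vabc assms by simp
  qed
  have bdd: "bdd_above ((\<lambda>\<mu>. \<mu> X) ` P')" for X
    using pm unfolding prob_measure_def bdd_above_def by (intro exI[of _ 1]) auto
  have le: "\<mu> X \<le> upsilon e X" if "\<mu> \<in> P'" for \<mu> X
    using eq cSup_upper[OF imageI[OF that] bdd] by simp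
  have small: "\<mu> {a,b,c} \<le> 3/4" if "\<mu> \<in> P'" for \<mu>
  proof -
    have add: "\<And>A B. A \<inter> B = {} \<Longrightarrow> \<mu> (A \<union> B) = \<mu> A + \<mu> B"
      using pm that unfolding prob_measure_def by blast
    have h1: "\<mu> {a,b} = \<mu> {a} + \<mu> {b}" using add[of "{a}" "{b}"] by (simp add: insert_commute)
    have h2: "\<mu> {b,c} = \<mu> {b} + \<mu> {c}" using add[of "{b}" "{c}"] by (simp add: insert_commute)
    have h3: "\<mu> {a,c} = \<mu> {a} + \<mu> {c}" using add[of "{a}" "{c}"] by (simp add: insert_commute)
    have h4: "\<mu> {a,b,c} = \<mu> {a} + \<mu> {b,c}" using add[of "{a}" "{b,c}"] by (simp add: insert_commute)
    show ?thesis using h1 h2 h3 h4 le[OF that, of "{a,b}"] le[OF that, of "{b,c}"] le[OF that, of "{a,c}"]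
      vab vbc vac by linarith
  qed
  have "Sup ((\<lambda>\<mu>. \<mu> {a,b,c}) ` P') \<le> 3/4"
    using ne small by (intro cSup_least) auto
  then show False using eq vabc assms by (metis add_le_same_cancel1 linorder_not_le)
qed

theorem proposition2:
  fixes \<epsilon> :: real
  assumes "0 < \<epsilon>" and "\<epsilon> < 1/8"
  shows "property6 (upsilon \<epsilon>) \<and>
         \<not> (\<exists>P' :: (omega set \<Rightarrow> real) set.
               (\<forall>\<mu>\<in>P'. prob_measure \<mu>) \<and>
               (\<forall>X. upsilon \<epsilon> X = Sup ((\<lambda>\<mu>. \<mu> X) ` P')))"
  using part1[OF assms] part2[OF assms(1)] by blast

end
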